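(* Let $k,n,m,\mu$ be positive integers such that $m\ge n-2$, $n\ge4$ if $m=n-2$, and $k\ge\mu(n+m-1)/2$. Let $\mathcal{A}$ be a strict partial path decomposition of $\mu K_n$ of size $k$ in which at most $\mu(m-1)/2$ colour classes are $2$-factors of $\mu K_n$. Then some edge of $\mu K_n$ not in $\mathcal{A}$ can be added to one of the colour classes of $\mathcal{A}$ so that the result $\mathcal{A}'$ is a partial path decomposition of $\mu K_n$ of size $k$ in which at most $\mu(m-1)/2$ colour classes are $2$-factors of $\mu K_n$.
   Context: Graphs may have multiple edges. $\mu K_n$ is the loopless multigraph on $n$ vertices with every pair of distinct vertices joined by exactly $\mu$ edges. A decomposition of size $k$ of a graph $G$ is an ordered $k$-tuple $(G(1),\dots,G(k))$ of spanning subgraphs (colour classes; possibly edgeless) with pairwise disjoint edge sets whose union is $E(G)$. A partial decomposition of $\mu K_n$ is a decomposition of some spanning subgraph of $\mu K_n$; it is strict if that subgraph is a proper subgraph of $\mu K_n$. A partial path decomposition is one in which every colour class is a vertex-disjoint union of paths and cycles (two parallel edges form a cycle of length 2). A $2$-factor of $\mu K_n$ is a $2$-regular spanning subgraph (its cycles may have length 2). *)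

theory Defs
  imports Main
begin

text \<open>Edges of the multigraph mu K_n on vertex set {0..<n}: an edge is a triple (u, v, j)
  with u < v < n and j < mu; j distinguishes the mu parallel edges joining u and v.
  A spanning subgraph is identified with its edge set.\<close>

type_synonym edge = "nat \<times> nat \<times> nat"

definition ends :: "edge \<Rightarrow> nat set" where
  "ends e = {fst e, fst (snd e)}"

definition muKn_edges :: "nat \<Rightarrow> nat \<Rightarrow> edge set" where
  "muKn_edges mu n = {(u, v, j). u < v \<and> v < n \<and> j < mu}"

definition is_path :: "nat list \<times> edge list \<Rightarrow> bool" where
  "is_path P = (let vs = fst P; es = snd P in
     vs \<noteq> [] \<and> length es + 1 = length vs \<and> distinct vs \<and> distinct es \<and>
     (\<forall>i < length es. ends (es ! i) = {vs ! i, vs ! (i + 1)}))"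

text \<open>A cycle of length l >= 2 (length 2 = two parallel edges).\<close>
definition is_cycle :: "nat list \<times> edge list \<Rightarrow> bool" where
  "is_cycle C = (let vs = fst C; es = snd C in
     length vs \<ge> 2 \<and> length es = length vs \<and> distinct vs \<and> distinct es \<and>
     (\<forall>i < length es. ends (es ! i) = {vs ! i, vs ! ((i + 1) mod length vs)}))"

definition paths_and_cycles :: "edge set \<Rightarrow> bool" where
  "paths_and_cycles H = (\<exists>Cs :: (nat list \<times> edge list) set. finite Cs \<and>
     (\<forall>C \<in> Cs. is_path C \<or> is_cycle C) \<and>
     (\<forall>C \<in> Cs. \<forall>D \<in> Cs. C \<noteq> D \<longrightarrow> set (fst C) \<inter> set (fst D) = {}) \<and>
     H = (\<Union>C \<in> Cs. set (snd C)))"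

definition partial_decomp :: "nat \<Rightarrow> nat \<Rightarrow> nat \<Rightarrow> (nat \<Rightarrow> edge set) \<Rightarrow> bool" where
  "partial_decomp mu n k G =
     ((\<forall>i < k. G i \<subseteq> muKn_edges mu n) \<and>
      (\<forall>i < k. \<forall>j < k. i \<noteq> j \<longrightarrow> G i \<inter> G j = {}))"

definition used_edges :: "nat \<Rightarrow> (nat \<Rightarrow> edge set) \<Rightarrow> edge set" where
  "used_edges k G = (\<Union>i < k. G i)"

definition strict_partial_decomp :: "nat \<Rightarrow> nat \<Rightarrow> nat \<Rightarrow> (nat \<Rightarrow> edge set) \<Rightarrow> bool" where
  "strict_partial_decomp mu n k G =
     (partial_decomp mu n k G \<and> used_edges k G \<noteq> muKn_edges mu n)"

definition partial_path_decomp :: "nat \<Rightarrow> nat \<Rightarrow> nat \<Rightarrow> (nat \<Rightarrow> edge set) \<Rightarrow> bool" where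
  "partial_path_decomp mu n k G =
     (partial_decomp mu n k G \<and> (\<forall>i < k. paths_and_cycles (G i)))"

definition degree :: "edge set \<Rightarrow> nat \<Rightarrow> nat" where
  "degree H v = card {e \<in> H. v \<in> ends e}"

definition two_factor :: "nat \<Rightarrow> nat \<Rightarrow> edge set \<Rightarrow> bool" where
  "two_factor mu n H = (H \<subseteq> muKn_edges mu n \<and> (\<forall>v < n. degree H v = 2))"

definition num_two_factors :: "nat \<Rightarrow> nat \<Rightarrow> nat \<Rightarrow> (nat \<Rightarrow> edge set) \<Rightarrow> nat" where
  "num_two_factors mu n k G = card {i. i < k \<and> two_factor mu n (G i)}"

end

theory Submission
  imports Defs
begin


lemma ends_sub:
  assumes "is_path C \<or> is_cycle C" "x \<in> set (snd C)"
  shows "ends x \<subseteq> set (fst C)"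
proof -
  obtain i where i: "i < length (snd C)" "x = snd C ! i" using assms(2) by (metis in_set_conv_nth)
  show ?thesis using assms(1)
  proof
    assume p: "is_path C"
    then have "ends x = {fst C ! i, fst C ! (i+1)}" "length (snd C) + 1 = length (fst C)"
      using i unfolding is_path_def Let_def by auto
    then show ?thesis using i by auto
  next
    assume p: "is_cycle C"
    then have "ends x = {fst C ! i, fst C ! ((i+1) mod length (fst C))}" "length (snd C) = length (fst C)"
      using i unfolding is_cycle_def Let_def by auto
    moreover have "(i+1) mod length (fst C) < length (fst C)" using i \<open>length (snd C) = length (fst C)\<close> by (metis mod_less_divisor gr_implies_not0 neq0_conv)
    ultimately show ?thesis using i by auto
  qed
qed

lemma rev_path:
  assumes "is_path (vs, es)" shows "is_path (rev vs, rev es)"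
  using assms unfolding is_path_def Let_def
proof (clarsimp)
  fix i assume h: "vs \<noteq> []" "Suc (length es) = length vs" "distinct vs" "distinct es"
    "\<forall>i<length es. ends (es ! i) = {vs ! i, vs ! Suc i}" "i < length es"
  have "ends (es ! (length es - Suc i)) = {vs ! (length es - Suc i), vs ! Suc (length es - Suc i)}"
    using h by auto
  moreover have "Suc (length es - Suc i) = length vs - Suc i" using h by auto
  moreover have "length es - Suc i = length vs - Suc (Suc i)" using h by auto
  ultimately show "ends (rev es ! i) = {rev vs ! i, rev vs ! Suc i}"
    using h by (simp add: rev_nth insert_commute)
qed

lemma merge_path:
  assumes "is_path (a, ea)" "is_path (b, eb)" "set a \<inter> set b = {}"
    "e \<notin> set ea" "e \<notin> set eb" "set ea \<inter> set eb = {}" "ends e = {last a, hd b}"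
  shows "is_path (a @ b, ea @ e # eb)"
proof -
  have h: "a \<noteq> []" "Suc (length ea) = length a" "distinct a" "distinct ea"
    "\<forall>i<length ea. ends (ea ! i) = {a ! i, a ! Suc i}" 
    "b \<noteq> []" "Suc (length eb) = length b" "distinct b" "distinct eb"
    "\<forall>i<length eb. ends (eb ! i) = {b ! i, b ! Suc i}"
    using assms(1,2) unfolding is_path_def Let_def by auto
  have E: "ends ((ea @ e # eb) ! i) = {(a @ b) ! i, (a @ b) ! Suc i}" if "i < length (ea @ e # eb)" for i
  proof -
  consider "i < length ea" | "i = length ea" | "i > length ea" by linarith
  then show ?thesis
  proof cases
    case 1 then show ?thesis using h by (simp add: nth_append)
  next
    case 2
    then have "length a - Suc 0 = length ea" using h by simp
    then show ?thesis using h 2 assms(7) by (simp add: nth_append last_conv_nth hd_conv_nth)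
  next
    case 3
    then obtain j where j: "i = Suc (length ea + j)" by (metis less_iff_Suc_add)
    then have "j < length eb" using that by auto
    moreover have "Suc (length ea + j) - length a = j" "Suc (Suc (length ea + j)) - length a = Suc j" using h by auto
    ultimately show ?thesis using h j by (simp add: nth_append)
  qed
  qed
  show ?thesis unfolding is_path_def Let_def fst_conv snd_conv
    using h assms(3-6) E by auto
qed

lemma close_cycle:
  assumes "is_path (a, ea)" "e \<notin> set ea" "ends e = {last a, hd a}" "length a \<ge> 2"
  shows "is_cycle (a, ea @ [e])"
proof -
  have h: "a \<noteq> []" "Suc (length ea) = length a" "distinct a" "distinct ea"
    "\<forall>i<length ea. ends (ea ! i) = {a ! i, a ! Suc i}" 
    using assms(1) unfolding is_path_def Let_def by auto
  have E: "ends ((ea @ [e]) ! i) = {a ! i, a ! (Suc i mod length a)}" if "i < length (ea @ [e])" for i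
  proof -
  have "i < Suc (length ea)" using that by simp
  then consider "i < length ea" | "i = length ea" by linarith
  then show ?thesis
  proof cases
    case 1 then show ?thesis using h by (simp add: nth_append)
  next
    case 2
    then have "length a - Suc 0 = length ea" using h by simp
    then show ?thesis using h 2 assms(3) by (simp add: nth_append last_conv_nth hd_conv_nth)
  qed
  qed
  show ?thesis unfolding is_cycle_def Let_def fst_conv snd_conv
    using h assms E by auto
qed

definition pc_wit :: "(nat list \<times> edge list) set \<Rightarrow> edge set \<Rightarrow> bool" where
  "pc_wit Cs H = (finite Cs \<and> (\<forall>C \<in> Cs. is_path C \<or> is_cycle C) \<and>
     (\<forall>C \<in> Cs. \<forall>D \<in> Cs. C \<noteq> D \<longrightarrow> set (fst C) \<inter> set (fst D) = {}) \<and>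
     H = (\<Union>C \<in> Cs. set (snd C)))"

lemma pc_iff: "paths_and_cycles H \<longleftrightarrow> (\<exists>Cs. pc_wit Cs H)"
  by (simp add: paths_and_cycles_def pc_wit_def)

lemma pc_wit_finite: "pc_wit Cs H \<Longrightarrow> finite H"
  unfolding pc_wit_def by auto

lemma replace:
  assumes "pc_wit Cs H" "R \<subseteq> Cs" "is_path N \<or> is_cycle N"
    "set (fst N) = (\<Union>r\<in>R. set (fst r)) \<union> V" "\<forall>D\<in>Cs - R. set (fst D) \<inter> V = {}"
    "set (snd N) = (\<Union>r\<in>R. set (snd r)) \<union> X"
  shows "pc_wit ((Cs - R) \<union> {N}) (H \<union> X)"
proof -
  have dis: "\<forall>C \<in> Cs. \<forall>D \<in> Cs. C \<noteq> D \<longrightarrow> set (fst C) \<inter> set (fst D) = {}"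
    and HU: "H = (\<Union>C \<in> Cs. set (snd C))" and fin: "finite Cs"
    and al: "\<forall>C \<in> Cs. is_path C \<or> is_cycle C"
    using assms(1) unfolding pc_wit_def by auto
  have ND: "set (fst N) \<inter> set (fst D) = {}" if D: "D \<in> Cs - R" for D
  proof -
    have "set (fst r) \<inter> set (fst D) = {}" if r: "r \<in> R" for r
    proof -
      have "r \<noteq> D" using r D by auto
      then show ?thesis using dis r D assms(2) by auto
    qed
    then have "(\<Union>r\<in>R. set (fst r)) \<inter> set (fst D) = {}" by auto
    moreover have "V \<inter> set (fst D) = {}" using assms(5) D by auto
    ultimately show "set (fst N) \<inter> set (fst D) = {}" using assms(4) by (simp add: Int_Un_distrib2)
  qed
  have D2: "set (fst C) \<inter> set (fst D) = {}"
    if h: "C \<in> (Cs - R) \<union> {N}" "D \<in> (Cs - R) \<union> {N}" "C \<noteq> D" for C D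
  proof -
    consider "C = N" "D \<in> Cs - R" | "D = N" "C \<in> Cs - R" | "C \<in> Cs - R" "D \<in> Cs - R"
      using h by blast
    then show ?thesis
    proof cases
      case 1 then show ?thesis using ND by simp
    next
      case 2 then show ?thesis using ND[of C] by (simp add: Int_commute)
    next
      case 3 then show ?thesis using dis h(3) by auto
    qed
  qed
  have "(\<Union>C \<in> (Cs - R) \<union> {N}. set (snd C)) = (\<Union>C \<in> Cs - R. set (snd C)) \<union> (\<Union>r\<in>R. set (snd r)) \<union> X"
    using assms(6) by auto
  also have "(\<Union>C \<in> Cs - R. set (snd C)) \<union> (\<Union>r\<in>R. set (snd r)) = (\<Union>C \<in> Cs. set (snd C))"
    using assms(2) by auto
  finally have "H \<union> X = (\<Union>C \<in> (Cs - R) \<union> {N}. set (snd C))" using HU by simp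
  moreover have "\<forall>C \<in> (Cs - R) \<union> {N}. is_path C \<or> is_cycle C" using al assms(3) by auto
  ultimately show ?thesis using fin D2 unfolding pc_wit_def by auto
qed

lemma card2_le:
  assumes "finite A" "a \<in> A" "b \<in> A" "a \<noteq> b" shows "2 \<le> card A"
proof -
  have "card {a, b} \<le> card A" using assms by (intro card_mono) auto
  then show ?thesis using assms(4) by simp
qed

lemma pos:
  assumes "pc_wit Cs H" "C \<in> Cs" "x \<in> set (fst C)" "degree H x \<le> 1"
  shows "is_path C \<and> (x = hd (fst C) \<or> x = last (fst C))"
proof -
  obtain vs es where C: "C = (vs, es)" by fastforce
  have fin: "finite H" using assms(1) by (rule pc_wit_finite)
  let ?D = "{e \<in> set es. x \<in> ends e}"
  have "set es \<subseteq> H" using assms(1,2) C unfolding pc_wit_def by force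
  then have "?D \<subseteq> {e \<in> H. x \<in> ends e}" by auto
  moreover have "finite {e \<in> H. x \<in> ends e}" using fin by simp
  ultimately have "card ?D \<le> card {e \<in> H. x \<in> ends e}" by (rule card_mono[rotated])
  then have "card ?D \<le> 1" using assms(4) unfolding degree_def by simp
  then have D1: "\<not> 2 \<le> card ?D" by simp
  obtain p where p: "p < length vs" "vs ! p = x" using assms(3) C by (auto simp: in_set_conv_nth)
  have "is_path C \<or> is_cycle C" using assms(1,2) unfolding pc_wit_def by auto
  then show ?thesis
  proof
    assume cy: "is_cycle C"
    then have h: "length vs \<ge> 2" "length es = length vs" "distinct es"
      "\<forall>i<length es. ends (es ! i) = {vs ! i, vs ! ((i + 1) mod length vs)}"
      using C unfolding is_cycle_def Let_def by auto
    define q where "q = (if p = 0 then length vs - 1 else p - 1)"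
    have q: "q < length vs" "(q + 1) mod length vs = p" "q \<noteq> p" using p h unfolding q_def by auto
    have "es ! p \<in> set es" "es ! q \<in> set es" using h p q by auto
    moreover have "x \<in> ends (es ! p)" "x \<in> ends (es ! q)" using h p q by auto
    ultimately have "es ! p \<in> ?D" "es ! q \<in> ?D" by auto
    moreover have "es ! p \<noteq> es ! q" using h p q by (simp add: nth_eq_iff_index_eq)
    ultimately have False using D1 card2_le[of ?D] by auto
    then show ?thesis ..
  next
    assume pa: "is_path C"
    then have h: "vs \<noteq> []" "length es + 1 = length vs" "distinct es"
      "\<forall>i<length es. ends (es ! i) = {vs ! i, vs ! (i + 1)}"
      using C unfolding is_path_def Let_def by auto
    have "p = 0 \<or> p = length es"
    proof (rule ccontr)
      assume "\<not> (p = 0 \<or> p = length es)"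
      then have pp: "0 < p" "p < length es" using p h by auto
      have a: "es ! (p - 1) \<in> ?D" using h pp p by (auto intro!: nth_mem)
      have b: "es ! p \<in> ?D" using h pp p by (auto intro!: nth_mem)
      have "es ! (p - 1) \<noteq> es ! p" using h pp by (simp add: nth_eq_iff_index_eq)
      then have "2 \<le> card ?D" using card2_le[OF _ a b] by simp
      then show False using D1 by simp
    qed
    moreover have "length vs - Suc 0 = length es" using h by simp
    ultimately show ?thesis using pa C p h by (auto simp: hd_conv_nth last_conv_nth)
  qed
qed

lemma cover:
  assumes "pc_wit Cs H"
  shows "\<exists>Cs'. pc_wit Cs' H \<and> (\<exists>C\<in>Cs'. x \<in> set (fst C)) \<and>
     (\<forall>y. (\<exists>C\<in>Cs. y \<in> set (fst C)) \<longrightarrow> (\<exists>C\<in>Cs'. y \<in> set (fst C)))"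
proof (cases "\<exists>C\<in>Cs. x \<in> set (fst C)")
  case True then show ?thesis using assms by blast
next
  case False
  have p: "is_path ([x], [])" unfolding is_path_def by simp
  have "pc_wit ((Cs - {}) \<union> {([x], [])}) (H \<union> {})"
    by (rule replace[OF assms _ _ _ _, where V = "{x}"]) (use p False in auto)
  then show ?thesis by (intro exI[of _ "Cs \<union> {([x], [])}"]) auto
qed

definition rvp :: "nat list \<times> edge list \<Rightarrow> nat list \<times> edge list" where
  "rvp C = (rev (fst C), rev (snd C))"

lemma rvp_path: "is_path C \<Longrightarrow> is_path (rvp C)"
  unfolding rvp_def using rev_path[of "fst C" "snd C"] by simp

lemma path_ne: "is_path C \<Longrightarrow> fst C \<noteq> []"
  unfolding is_path_def Let_def by simp

lemma ends_ne: "ends e \<noteq> {}" unfolding ends_def by simp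



lemma add_edge:
  assumes "paths_and_cycles H" "e \<notin> H" "ends e = {u, v}" "u \<noteq> v"
    "degree H u \<le> 1" "degree H v \<le> 1"
  shows "paths_and_cycles (insert e H)"
proof -
  obtain Cs0 where "pc_wit Cs0 H" using assms(1) pc_iff by blast
  then obtain Cs1 where "pc_wit Cs1 H" "\<exists>C\<in>Cs1. u \<in> set (fst C)" using cover by blast
  then obtain Cs where W: "pc_wit Cs H" and "\<exists>C\<in>Cs. u \<in> set (fst C)" "\<exists>C\<in>Cs. v \<in> set (fst C)"
    using cover[of Cs1 H v] by blast
  then obtain P Q where P: "P \<in> Cs" "u \<in> set (fst P)" and Q: "Q \<in> Cs" "v \<in> set (fst Q)" by blast
  have Pp: "is_path P" "u = hd (fst P) \<or> u = last (fst P)" using pos[OF W P assms(5)] by auto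
  have Qp: "is_path Q" "v = hd (fst Q) \<or> v = last (fst Q)" using pos[OF W Q assms(6)] by auto
  have subH: "\<And>C. C \<in> Cs \<Longrightarrow> set (snd C) \<subseteq> H" using W unfolding pc_wit_def by auto
  have all: "\<forall>C\<in>Cs. is_path C \<or> is_cycle C" using W unfolding pc_wit_def by auto
  have dis: "\<forall>C \<in> Cs. \<forall>D \<in> Cs. C \<noteq> D \<longrightarrow> set (fst C) \<inter> set (fst D) = {}"
    using W unfolding pc_wit_def by auto
  show ?thesis
  proof (cases "P = Q")
    case True
    obtain a ea where Pe: "P = (a, ea)" by fastforce
    have fa: "fst P = a" "fst Q = a" using Pe True by simp_all
    have uv: "u = hd a \<or> u = last a" "v = hd a \<or> v = last a" using Pp(2) Qp(2) fa by simp_all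
    have ends: "ends e = {last a, hd a}" using uv assms(3,4) by auto
    have "u \<in> set a" "v \<in> set a" using P(2) Q(2) fa by simp_all
    then have "{u, v} \<subseteq> set a" by simp
    then have "card {u, v} \<le> card (set a)" by (intro card_mono) simp_all
    then have "2 \<le> length a" using assms(4) card_length[of a] by simp
    moreover have "e \<notin> set ea" using subH[OF P(1)] Pe assms(2) by auto
    moreover have "is_path (a, ea)" using Pp(1) Pe by simp
    ultimately have cyc: "is_cycle (a, ea @ [e])" using close_cycle ends by blast
    have "pc_wit ((Cs - {P}) \<union> {(a, ea @ [e])}) (H \<union> {e})"
    proof (rule replace[OF W, where V = "{}"])
      show "{P} \<subseteq> Cs" using P(1) by simp
      show "is_path (a, ea @ [e]) \<or> is_cycle (a, ea @ [e])" using cyc by simp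
      show "set (fst (a, ea @ [e])) = (\<Union>r\<in>{P}. set (fst r)) \<union> {}" using Pe by simp
      show "\<forall>D\<in>Cs - {P}. set (fst D) \<inter> {} = {}" by simp
      show "set (snd (a, ea @ [e])) = (\<Union>r\<in>{P}. set (snd r)) \<union> {e}" using Pe by auto
    qed
    then show ?thesis using pc_iff by auto
  next
    case False
    define P' where "P' = (if last (fst P) = u then P else rvp P)"
    define Q' where "Q' = (if hd (fst Q) = v then Q else rvp Q)"
    have neP: "fst P \<noteq> []" using path_ne[OF Pp(1)] .
    have neQ: "fst Q \<noteq> []" using path_ne[OF Qp(1)] .
    have P': "is_path P'" "last (fst P') = u" "set (fst P') = set (fst P)" "set (snd P') = set (snd P)"
    proof -
      show "is_path P'" unfolding P'_def using Pp(1) rvp_path[of P] by simp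
      show "last (fst P') = u" unfolding P'_def rvp_def using Pp(2) neP by (auto simp: last_rev)
      show "set (fst P') = set (fst P)" unfolding P'_def rvp_def by simp
      show "set (snd P') = set (snd P)" unfolding P'_def rvp_def by simp
    qed
    have Q': "is_path Q'" "hd (fst Q') = v" "set (fst Q') = set (fst Q)" "set (snd Q') = set (snd Q)"
    proof -
      show "is_path Q'" unfolding Q'_def using Qp(1) rvp_path[of Q] by simp
      show "hd (fst Q') = v" unfolding Q'_def rvp_def using Qp(2) neQ by (auto simp: hd_rev)
      show "set (fst Q') = set (fst Q)" unfolding Q'_def rvp_def by simp
      show "set (snd Q') = set (snd Q)" unfolding Q'_def rvp_def by simp
    qed
    obtain a ea where Pe: "P' = (a, ea)" by fastforce
    obtain b eb where Qe: "Q' = (b, eb)" by fastforce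
    have sa: "set a = set (fst P)" "set ea = set (snd P)" using P'(3,4) Pe by simp_all
    have sb: "set b = set (fst Q)" "set eb = set (snd Q)" using Q'(3,4) Qe by simp_all
    have "set (fst P) \<inter> set (fst Q) = {}" using dis P(1) Q(1) False by blast
    then have d: "set a \<inter> set b = {}" using sa sb by simp
    have "e \<notin> set ea" using subH[OF P(1)] sa assms(2) by auto
    moreover have "e \<notin> set eb" using subH[OF Q(1)] sb assms(2) by auto
    moreover have "set ea \<inter> set eb = {}"
    proof (rule ccontr)
      assume "set ea \<inter> set eb \<noteq> {}"
      then obtain x where x: "x \<in> set ea" "x \<in> set eb" by blast
      have "ends x \<subseteq> set a" using ends_sub[of P' x] P'(1) Pe x by simp
      moreover have "ends x \<subseteq> set b" using ends_sub[of Q' x] Q'(1) Qe x by simp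
      ultimately show False using d ends_ne[of x] by blast
    qed
    moreover have "ends e = {last a, hd b}" using assms(3) P'(2) Q'(2) Pe Qe by simp
    moreover have "is_path (a, ea)" "is_path (b, eb)" using P'(1) Q'(1) Pe Qe by simp_all
    ultimately have np: "is_path (a @ b, ea @ e # eb)"
      using merge_path d by blast
    have "pc_wit ((Cs - {P, Q}) \<union> {(a @ b, ea @ e # eb)}) (H \<union> {e})"
    proof (rule replace[OF W, where V = "{}"])
      show "{P, Q} \<subseteq> Cs" using P(1) Q(1) by simp
      show "is_path (a @ b, ea @ e # eb) \<or> is_cycle (a @ b, ea @ e # eb)" using np by simp
      show "set (fst (a @ b, ea @ e # eb)) = (\<Union>r\<in>{P, Q}. set (fst r)) \<union> {}" using sa sb by auto
      show "\<forall>D\<in>Cs - {P, Q}. set (fst D) \<inter> {} = {}" by simp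
      show "set (snd (a @ b, ea @ e # eb)) = (\<Union>r\<in>{P, Q}. set (snd r)) \<union> {e}" using sa sb by auto
    qed
    then show ?thesis using pc_iff by auto
  qed
qed



lemma ends_tr[simp]: "ends (a, b, j) = {a, b}" unfolding ends_def by simp

lemma muKn_finite: "finite (muKn_edges mu n)"
proof -
  have "muKn_edges mu n \<subseteq> {..<n} \<times> {..<n} \<times> {..<mu}" unfolding muKn_edges_def by auto
  then show ?thesis by (rule finite_subset) auto
qed

lemma inc_sub:
  "{e \<in> muKn_edges mu n. x \<in> ends e} \<subseteq> (\<lambda>(w, j). (min x w, max x w, j)) ` (({0..<n} - {x}) \<times> {..<mu})"
proof
  fix e assume "e \<in> {e \<in> muKn_edges mu n. x \<in> ends e}"
  then obtain a b j where e: "e = (a, b, j)" "a < b" "b < n" "j < mu" "x = a \<or> x = b"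
    unfolding muKn_edges_def by auto
  show "e \<in> (\<lambda>(w, j). (min x w, max x w, j)) ` (({0..<n} - {x}) \<times> {..<mu})"
  proof (cases "x = a")
    case True
    then show ?thesis using e by (intro image_eqI[of _ _ "(b, j)"]) auto
  next
    case False
    then show ?thesis using e by (intro image_eqI[of _ _ "(a, j)"]) auto
  qed
qed

lemma inc_card: assumes "x < n" shows "card {e \<in> muKn_edges mu n. x \<in> ends e} \<le> mu * (n - 1)"
proof -
  have "card {e \<in> muKn_edges mu n. x \<in> ends e} \<le> card (({0..<n} - {x}) \<times> {..<mu})"
    by (rule order_trans[OF card_mono[OF _ inc_sub] card_image_le]) auto
  also have "\<dots> = (n - 1) * mu" using assms by (simp add: card_cartesian_product)
  finally show ?thesis by (simp add: mult.commute)
qed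

lemma inc2_card: assumes "u < v" "v < n"
  shows "card {e \<in> muKn_edges mu n. u \<in> ends e \<or> v \<in> ends e} \<le> mu * (2 * n - 3)"
proof -
  let ?Su = "{e \<in> muKn_edges mu n. u \<in> ends e}"
  let ?f = "(\<lambda>(w, j). (min v w, max v w, j))"
  let ?T = "?f ` (({0..<n} - {u, v}) \<times> {..<mu})"
  have sub: "{e \<in> muKn_edges mu n. u \<in> ends e \<or> v \<in> ends e} \<subseteq> ?Su \<union> ?T"
  proof
    fix e assume "e \<in> {e \<in> muKn_edges mu n. u \<in> ends e \<or> v \<in> ends e}"
    then obtain a b j where e: "e = (a, b, j)" "a < b" "b < n" "j < mu" "u = a \<or> u = b \<or> v = a \<or> v = b"
      unfolding muKn_edges_def by auto
    show "e \<in> ?Su \<union> ?T"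
    proof (cases "u = a \<or> u = b")
      case True then show ?thesis using e unfolding muKn_edges_def by auto
    next
      case False
      show ?thesis
      proof (cases "v = a")
        case True
        then have "e \<in> ?T" using e False by (intro image_eqI[of _ _ "(b, j)"]) auto
        then show ?thesis by blast
      next
        case F2: False
        then have "e \<in> ?T" using e False by (intro image_eqI[of _ _ "(a, j)"]) auto
        then show ?thesis by blast
      qed
    qed
  qed
  have fT: "finite ?T" by auto
  have "card {e \<in> muKn_edges mu n. u \<in> ends e \<or> v \<in> ends e} \<le> card (?Su \<union> ?T)"
    by (rule card_mono[OF _ sub]) (use muKn_finite in auto)
  also have "\<dots> \<le> card ?Su + card ?T" by (rule card_Un_le)
  also have "card ?T \<le> card (({0..<n} - {u, v}) \<times> {..<mu})" by (rule card_image_le) auto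
  also have "\<dots> = (n - 2) * mu"
  proof -
    have "card ({0..<n} - {u, v}) = card {0..<n} - card {u, v}"
      using assms by (intro card_Diff_subset) auto
    then have "card ({0..<n} - {u, v}) = n - 2" using assms by simp
    then show ?thesis by (simp add: card_cartesian_product)
  qed
  finally have "card {e \<in> muKn_edges mu n. u \<in> ends e \<or> v \<in> ends e} \<le> mu * (n - 1) + (n - 2) * mu"
    using inc_card[of u n mu] assms by linarith
  also have "\<dots> = mu * (2 * n - 3)" using assms by (simp add: algebra_simps diff_mult_distrib2)
  finally show ?thesis .
qed

lemma degree_insert:
  assumes "finite H" "e \<notin> H" "x \<in> ends e"
  shows "degree (insert e H) x = degree H x + 1"
proof -
  have "{e' \<in> insert e H. x \<in> ends e'} = insert e {e' \<in> H. x \<in> ends e'}" using assms by auto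
  then show ?thesis unfolding degree_def using assms by simp
qed

lemma sum_used:
  assumes "partial_decomp mu n k G"
  shows "(\<Sum>i<k. card {e \<in> G i. P e}) = card {e \<in> used_edges k G. P e}"
proof -
  have "{e \<in> used_edges k G. P e} = (\<Union>i\<in>{..<k}. {e \<in> G i. P e})" unfolding used_edges_def by auto
  moreover have "card (\<Union>i\<in>{..<k}. {e \<in> G i. P e}) = (\<Sum>i<k. card {e \<in> G i. P e})"
  proof (rule card_UN_disjoint)
    show "\<forall>i\<in>{..<k}. finite {e \<in> G i. P e}"
    proof
      fix i assume "i \<in> {..<k}"
      then have "G i \<subseteq> muKn_edges mu n" using assms unfolding partial_decomp_def by auto
      then have "finite (G i)" using muKn_finite finite_subset by blast
      then show "finite {e \<in> G i. P e}" by simp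
    qed
    show "\<forall>i\<in>{..<k}. \<forall>j\<in>{..<k}. i \<noteq> j \<longrightarrow> {e \<in> G i. P e} \<inter> {e \<in> G j. P e} = {}"
      using assms unfolding partial_decomp_def by blast
  qed simp
  ultimately show ?thesis by simp
qed



theorem lemma5:
  fixes k n m mu :: nat and G :: "nat \<Rightarrow> edge set"
  assumes "0 < k" "0 < n" "0 < m" "0 < mu"
    and "m + 2 \<ge> n"
    and "m + 2 = n \<longrightarrow> n \<ge> 4"
    and "2 * k \<ge> mu * (n + m - 1)"
    and "strict_partial_decomp mu n k G"
    and "partial_path_decomp mu n k G"
    and "2 * num_two_factors mu n k G \<le> mu * (m - 1)"
  shows "\<exists>e \<in> muKn_edges mu n - used_edges k G. \<exists>j < k.
           partial_path_decomp mu n k (G(j := insert e (G j))) \<and>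
           2 * num_two_factors mu n k (G(j := insert e (G j))) \<le> mu * (m - 1)"
proof -
  have pd: "partial_decomp mu n k G" using assms(8) unfolding strict_partial_decomp_def by simp
  have sub: "\<And>i. i < k \<Longrightarrow> G i \<subseteq> muKn_edges mu n" using pd unfolding partial_decomp_def by simp
  have dis: "\<And>i j. i < k \<Longrightarrow> j < k \<Longrightarrow> i \<noteq> j \<Longrightarrow> G i \<inter> G j = {}"
    using pd unfolding partial_decomp_def by simp
  have pcs: "\<And>i. i < k \<Longrightarrow> paths_and_cycles (G i)"
    using assms(9) unfolding partial_path_decomp_def by simp
  have finG: "\<And>i. i < k \<Longrightarrow> finite (G i)" using sub muKn_finite finite_subset by blast
  have usub: "used_edges k G \<subseteq> muKn_edges mu n" using sub unfolding used_edges_def by auto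
  then obtain e where e: "e \<in> muKn_edges mu n" "e \<notin> used_edges k G"
    using assms(8) unfolding strict_partial_decomp_def by blast
  then obtain u v c where uvc: "e = (u, v, c)" "u < v" "v < n" "c < mu"
    unfolding muKn_edges_def by auto
  have ee: "ends e = {u, v}" using uvc by simp
  have enG: "\<And>i. i < k \<Longrightarrow> e \<notin> G i" using e(2) unfolding used_edges_def by auto
  define t where "t = num_two_factors mu n k G"
  have usub': "used_edges k G \<subseteq> muKn_edges mu n - {e}" using usub e by auto
  have degu: "card {e' \<in> used_edges k G. x \<in> ends e'} \<le> mu * (n - 1) - 1" if x: "x \<in> {u, v}" for x
  proof -
    have "x < n" using x uvc by auto
    have "{e' \<in> used_edges k G. x \<in> ends e'} \<subseteq> {e' \<in> muKn_edges mu n. x \<in> ends e'} - {e}"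
      using usub' by auto
    then have "card {e' \<in> used_edges k G. x \<in> ends e'} \<le> card ({e' \<in> muKn_edges mu n. x \<in> ends e'} - {e})"
      by (rule card_mono[rotated]) (use muKn_finite in auto)
    also have "\<dots> = card {e' \<in> muKn_edges mu n. x \<in> ends e'} - 1"
      by (rule card_Diff_singleton) (use e x ee in auto)
    finally show ?thesis using inc_card[OF \<open>x < n\<close>, of mu] by linarith
  qed
  have degb: "card {e' \<in> used_edges k G. u \<in> ends e' \<or> v \<in> ends e'} \<le> mu * (2 * n - 3) - 1"
  proof -
    have "{e' \<in> used_edges k G. u \<in> ends e' \<or> v \<in> ends e'} \<subseteq> {e' \<in> muKn_edges mu n. u \<in> ends e' \<or> v \<in> ends e'} - {e}"
      using usub' by auto
    then have "card {e' \<in> used_edges k G. u \<in> ends e' \<or> v \<in> ends e'} \<le> card ({e' \<in> muKn_edges mu n. u \<in> ends e' \<or> v \<in> ends e'} - {e})"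
      by (rule card_mono[rotated]) (use muKn_finite in auto)
    also have "\<dots> = card {e' \<in> muKn_edges mu n. u \<in> ends e' \<or> v \<in> ends e'} - 1"
      by (rule card_Diff_singleton) (use e ee in auto)
    finally show ?thesis using inc2_card[OF uvc(2,3), of mu] by linarith
  qed
  have n2: "n \<ge> 2" using uvc by auto
  have n2m: "n \<le> 2 * m" using assms(3,5,6) by linarith
  have claim: "\<exists>j<k. degree (G j) u \<le> 1 \<and> degree (G j) v \<le> 1 \<and>
      (2 * (t + 1) \<le> mu * (m - 1) \<or> \<not> two_factor mu n (insert e (G j)))"
  proof (rule ccontr)
    assume nc: "\<not> ?thesis"
    show False
    proof (cases "2 * (t + 1) \<le> mu * (m - 1)")
      case True
      have each: "2 \<le> card {e' \<in> G j. u \<in> ends e' \<or> v \<in> ends e'}" if j: "j < k" for j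
      proof -
        have "\<not> (degree (G j) u \<le> 1 \<and> degree (G j) v \<le> 1)" using nc True j by blast
        then have "2 \<le> degree (G j) u \<or> 2 \<le> degree (G j) v" by linarith
        moreover have "degree (G j) u \<le> card {e' \<in> G j. u \<in> ends e' \<or> v \<in> ends e'}"
          unfolding degree_def by (rule card_mono) (use finG[OF j] in auto)
        moreover have "degree (G j) v \<le> card {e' \<in> G j. u \<in> ends e' \<or> v \<in> ends e'}"
          unfolding degree_def by (rule card_mono) (use finG[OF j] in auto)
        ultimately show ?thesis by linarith
      qed
      have "(\<Sum>j<k. (2::nat)) \<le> (\<Sum>j<k. card {e' \<in> G j. u \<in> ends e' \<or> v \<in> ends e'})"
        by (rule sum_mono) (use each in auto)
      also have "\<dots> = card {e' \<in> used_edges k G. u \<in> ends e' \<or> v \<in> ends e'}"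
        by (rule sum_used[OF pd])
      finally have "2 * k \<le> mu * (2 * n - 3) - 1" using degb by simp
      moreover have "mu * (2 * n - 3) \<le> mu * (n + m - 1)" using assms(5) n2 by (intro mult_le_mono2) linarith
      moreover have "mu * (2 * n - 3) \<ge> 1" using assms(4) n2 by simp
      ultimately show False using assms(7) by linarith
    next
      case False
      have each: "2 + 2 * (if two_factor mu n (G j) then 1 else 0) \<le> degree (G j) u + degree (G j) v"
        if j: "j < k" for j
      proof (cases "two_factor mu n (G j)")
        case True
        then have "degree (G j) u = 2" "degree (G j) v = 2" using uvc unfolding two_factor_def by auto
        then show ?thesis using True by simp
      next
        case nf: False
        have "\<not> (degree (G j) u \<le> 1 \<and> degree (G j) v \<le> 1) \<or> two_factor mu n (insert e (G j))"
          using nc False j by blast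
        then have "2 \<le> degree (G j) u \<or> 2 \<le> degree (G j) v \<or> two_factor mu n (insert e (G j))"
          by linarith
        moreover have "two_factor mu n (insert e (G j)) \<Longrightarrow> degree (G j) u = 1 \<and> degree (G j) v = 1"
        proof -
          assume tf: "two_factor mu n (insert e (G j))"
          have "degree (insert e (G j)) u = 2" "degree (insert e (G j)) v = 2"
            using tf uvc unfolding two_factor_def by auto
          then show ?thesis using degree_insert[OF finG[OF j] enG[OF j], of u]
              degree_insert[OF finG[OF j] enG[OF j], of v] ee by simp
        qed
        ultimately show ?thesis using nf by auto
      qed
      have "(\<Sum>j<k. 2 + 2 * (if two_factor mu n (G j) then 1 else 0)) \<le> (\<Sum>j<k. degree (G j) u + degree (G j) v)"
        by (rule sum_mono) (use each in auto)
      also have "\<dots> = (\<Sum>j<k. degree (G j) u) + (\<Sum>j<k. degree (G j) v)" by (rule sum.distrib)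
      also have "(\<Sum>j<k. degree (G j) u) = card {e' \<in> used_edges k G. u \<in> ends e'}"
        unfolding degree_def by (rule sum_used[OF pd])
      also have "(\<Sum>j<k. degree (G j) v) = card {e' \<in> used_edges k G. v \<in> ends e'}"
        unfolding degree_def by (rule sum_used[OF pd])
      finally have A: "(\<Sum>j<k. 2 + 2 * (if two_factor mu n (G j) then 1 else 0)) \<le> 2 * (mu * (n - 1) - 1)"
        using degu[of u] degu[of v] by simp
      have "{..<k} \<inter> {j. two_factor mu n (G j)} = {i. i < k \<and> two_factor mu n (G i)}" by auto
      then have "(\<Sum>j<k. (if two_factor mu n (G j) then 1 else (0::nat))) = t"
        unfolding t_def num_two_factors_def by (simp add: sum.If_cases)
      moreover have "(\<Sum>j<k. 2 + 2 * (if two_factor mu n (G j) then 1 else (0::nat))) =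
          (\<Sum>j<k. 2) + (\<Sum>j<k. 2 * (if two_factor mu n (G j) then 1 else (0::nat)))"
        by (rule sum.distrib)
      moreover have "(\<Sum>j<k. 2 * (if two_factor mu n (G j) then 1 else (0::nat))) =
          2 * (\<Sum>j<k. (if two_factor mu n (G j) then 1 else (0::nat)))"
        by (rule sum_distrib_left[symmetric])
      ultimately have "(\<Sum>j<k. 2 + 2 * (if two_factor mu n (G j) then 1 else (0::nat))) = 2 * k + 2 * t"
        by simp
      then have B: "2 * k + 2 * t \<le> 2 * (mu * (n - 1)) - 2" using A by simp
      have C: "mu * (m - 1) \<le> 2 * t + 1" using False by simp
      have "(n + m - 1) + (m - 1) = n + 2 * m - 2" using assms(3) by simp
      then have "mu * (n + m - 1) + mu * (m - 1) = mu * (n + 2 * m - 2)"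
        by (metis add_mult_distrib2)
      moreover have "mu * (2 * n - 2) \<le> mu * (n + 2 * m - 2)" using n2m by (intro mult_le_mono2) linarith
      moreover have "2 * (mu * (n - 1)) = mu * (2 * n - 2)" by (simp add: algebra_simps diff_mult_distrib2)
      moreover have "mu * (2 * n - 2) \<ge> 2"
      proof -
        have "2 * n - 2 \<ge> 2" using n2 by linarith
        then have "mu * (2 * n - 2) \<ge> 1 * 2" using assms(4) by (intro mult_le_mono) auto
        then show ?thesis by simp
      qed
      ultimately show False using assms(7) B C by linarith
    qed
  qed
  then obtain j where j: "j < k" "degree (G j) u \<le> 1" "degree (G j) v \<le> 1"
    "2 * (t + 1) \<le> mu * (m - 1) \<or> \<not> two_factor mu n (insert e (G j))" by blast
  define G' where "G' = G(j := insert e (G j))"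
  have pcj: "paths_and_cycles (insert e (G j))"
    by (rule add_edge[OF pcs[OF j(1)] enG[OF j(1)] ee]) (use uvc j in auto)
  have "partial_path_decomp mu n k G'"
    unfolding partial_path_decomp_def partial_decomp_def
  proof (intro conjI allI impI)
    fix i assume i: "i < k"
    show "G' i \<subseteq> muKn_edges mu n" using sub[OF i] sub[OF j(1)] e(1) unfolding G'_def by auto
    show "paths_and_cycles (G' i)" using pcs[OF i] pcj unfolding G'_def by auto
  next
    fix i i' assume i: "i < k" "i' < k" "i \<noteq> i'"
    show "G' i \<inter> G' i' = {}"
      using dis[OF i] enG i unfolding G'_def by auto
  qed
  moreover have "2 * num_two_factors mu n k G' \<le> mu * (m - 1)"
  proof -
    have fin: "finite {i. i < k \<and> two_factor mu n (G i)}" by simp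
    have s1: "{i. i < k \<and> two_factor mu n (G' i)} \<subseteq> insert j {i. i < k \<and> two_factor mu n (G i)}"
      unfolding G'_def by auto
    show ?thesis
    proof (cases "2 * (t + 1) \<le> mu * (m - 1)")
      case True
      have "card {i. i < k \<and> two_factor mu n (G' i)} \<le> card (insert j {i. i < k \<and> two_factor mu n (G i)})"
        by (rule card_mono[OF _ s1]) simp
      also have "\<dots> \<le> t + 1" unfolding t_def num_two_factors_def by (simp add: card_insert_if)
      finally have "2 * card {i. i < k \<and> two_factor mu n (G' i)} \<le> 2 * (t + 1)" by simp
      then show ?thesis using True unfolding num_two_factors_def by (rule le_trans)
    next
      case False
      then have "\<not> two_factor mu n (G' j)" using j(4) unfolding G'_def by simp
      then have "{i. i < k \<and> two_factor mu n (G' i)} \<subseteq> {i. i < k \<and> two_factor mu n (G i)}"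
        unfolding G'_def by auto
      then have "card {i. i < k \<and> two_factor mu n (G' i)} \<le> t"
        unfolding t_def num_two_factors_def by (rule card_mono[rotated]) simp
      then show ?thesis using assms(10) unfolding t_def num_two_factors_def by linarith
    qed
  qed
  ultimately show ?thesis using e j(1) unfolding G'_def by blast
qed


end
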